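(* Let $A:\mathbb{R}^n\to\mathbb{R}^{n\times n}$ be symmetric-matrix valued, three times continuously differentiable at every $v\neq 0$, with $A(\alpha v)=A(v)$ for all $\alpha\in\mathbb{R}\setminus\{0\}$. Let $J(v):=\frac{\partial}{\partial v}(A(v)v)$, and for $\sigma\in\mathbb{R}$ define $\varphi(v):=\psi(v)/\|\psi(v)\|_2$ with $\psi(v):=(J(v)-\sigma I)^{-1}v$ (whenever $J(v)-\sigma I$ is nonsingular). Suppose $(\lambda_*,v_* )$ satisfies $A(v_* )v_*=\lambda_*v_*$ with $\|v_*\|_2=1$, and let $\sigma\in\mathbb{R}$ be such that $J(v_* )-\sigma I$ is nonsingular. Then $$\varphi'(v_* )=|\lambda_*-\sigma|\,(I-v_*v_*^T)\,(J(v_* )-\sigma I)^{-1}.$$ Moreover, if the iterates $v_{k+1}=\varphi(v_k)$ (i.e., $v_{k+1}=(J(v_k)-\sigma I)^{-1}v_k/\|(J(v_k)-\sigma I)^{-1}v_k\|_2$) are such that $J(v_k)-\sigma I$ is nonsingular for all $k$, then $$v_{k+1}\mp v_*=\varphi'(v_* )(v_k-v_* )+O(\|v_k-v_*\|^2),$$ where the sign is "$-$" (i.e., $v_{k+1}-v_*$) if $\sigma<\lambda_*$ and "$+$" (i.e., $v_{k+1}+v_*$) if $\sigma>\lambda_*$.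
   Context: $\varphi'(v)$ denotes the Jacobian matrix of $\varphi$ at $v$; $\|\cdot\|_2$ is the Euclidean norm; the $O$-term refers to $v_k\to v_*$. *)

theory Defs
  imports "HOL-Analysis.Analysis"
begin

text \<open>k times continuously differentiable on a set S (intended: S open), via iterated
  partial (directional along the standard basis) derivatives of the Frechet derivative.\<close>
fun Ck_on :: "nat \<Rightarrow> 'a::euclidean_space set \<Rightarrow> ('a \<Rightarrow> 'b::real_normed_vector) \<Rightarrow> bool" where
  "Ck_on 0 S f = continuous_on S f"
| "Ck_on (Suc k) S f = (f differentiable_on S \<and>
      (\<forall>b\<in>Basis. Ck_on k S (\<lambda>x. frechet_derivative f (at x) b)))"

definition Jmat :: "(real^'n \<Rightarrow> real^'n^'n) \<Rightarrow> real^'n \<Rightarrow> real^'n^'n" where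
  "Jmat A v = jacobian (\<lambda>w. A w *v w) (at v)"

definition psi :: "(real^'n \<Rightarrow> real^'n^'n) \<Rightarrow> real \<Rightarrow> real^'n \<Rightarrow> real^'n" where
  "psi A \<sigma> v = matrix_inv (Jmat A v - \<sigma> *\<^sub>R mat 1) *v v"

definition phi :: "(real^'n \<Rightarrow> real^'n^'n) \<Rightarrow> real \<Rightarrow> real^'n \<Rightarrow> real^'n" where
  "phi A \<sigma> v = (1 / norm (psi A \<sigma> v)) *\<^sub>R psi A \<sigma> v"

definition outer :: "real^'n \<Rightarrow> real^'n \<Rightarrow> real^'n^'n" where
  "outer v w = (\<chi> i j. v $ i * w $ j)"

end

theory Submission
  imports Defs
begin


lemma matrix_inv_props:
  fixes M :: "real^'n^'n"
  assumes "invertible M"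
  shows "M ** matrix_inv M = mat 1" "matrix_inv M ** M = mat 1"
proof -
  have "\<exists>A'. M ** A' = mat 1 \<and> A' ** M = mat 1" using assms unfolding invertible_def by blast
  from someI_ex[OF this] show "M ** matrix_inv M = mat 1" "matrix_inv M ** M = mat 1"
    unfolding matrix_inv_def by auto
qed

lemma bb_mv: "bounded_bilinear (\<lambda>(M::real^'n^'m) (x::real^'n). M *v x)"
proof -
  have "bilinear (\<lambda>(M::real^'n^'m) (x::real^'n). M *v x)"
    unfolding bilinear_def
    by (auto intro!: linearI simp: matrix_vector_mult_def vec_eq_iff sum.distrib algebra_simps sum_distrib_left)
  then show ?thesis using bilinear_conv_bounded_bilinear by blast
qed

lemma mv_sub_smat: "((J::real^'n^'n) - s *\<^sub>R mat 1) *v y = J *v y - s *\<^sub>R y"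
  by (simp add: matrix_vector_mult_diff_rdistrib bounded_bilinear.scaleR_left[OF bb_mv])

lemma outer_mv: "outer v v *v y = (v \<bullet> y) *\<^sub>R v"
  by (simp add: outer_def matrix_vector_mult_def vec_eq_iff inner_vec_def sum_distrib_left algebra_simps)

lemma lin_expand:
  fixes L :: "'a::euclidean_space \<Rightarrow> 'b::real_normed_vector"
  assumes "linear L"
  shows "L h = (\<Sum>b\<in>Basis. (h \<bullet> b) *\<^sub>R L b)"
proof -
  have "L h = L (\<Sum>b\<in>Basis. (h \<bullet> b) *\<^sub>R b)" by (simp add: euclidean_representation)
  also have "\<dots> = (\<Sum>b\<in>Basis. (h \<bullet> b) *\<^sub>R L b)"
    using assms by (simp add: linear_sum linear_scale)
  finally show ?thesis .
qed

lemma norm_lin_bound: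
  fixes L :: "'a::euclidean_space \<Rightarrow> 'b::real_normed_vector"
  assumes "linear L"
  shows "norm (L h) \<le> norm h * (\<Sum>b\<in>Basis. norm (L b))"
proof -
  have "norm (L h) \<le> (\<Sum>b\<in>Basis. norm ((h \<bullet> b) *\<^sub>R L b))"
    unfolding lin_expand[OF assms, of h] by (rule norm_sum)
  also have "\<dots> \<le> (\<Sum>b\<in>Basis. norm h * norm (L b))"
    by (intro sum_mono) (auto intro!: mult_right_mono simp: Basis_le_norm)
  finally show ?thesis by (simp add: sum_distrib_left)
qed



lemma bound_compact:
  fixes g :: "'a::metric_space \<Rightarrow> 'b::real_normed_vector"
  assumes "continuous_on K g" "compact K"
  shows "\<exists>B\<ge>0. \<forall>x\<in>K. norm (g x) \<le> B"
proof -
  have "bounded (g ` K)" using compact_imp_bounded[OF compact_continuous_image[OF assms(1,2)]] .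
  then obtain B where "\<forall>x\<in>K. norm (g x) \<le> B" by (auto simp: bounded_iff)
  then show ?thesis by (intro exI[of _ "max B 0"]) force
qed

lemma lip_from_partials:
  fixes g :: "'a::euclidean_space \<Rightarrow> 'b::real_normed_vector"
  assumes S: "open S" and dg: "g differentiable_on S"
    and pc: "\<forall>b\<in>Basis. continuous_on S (\<lambda>x. frechet_derivative g (at x) b)"
    and K: "compact K" "convex K" "K \<subseteq> S"
  shows "\<exists>L\<ge>0. \<forall>x\<in>K. \<forall>y\<in>K. norm (g x - g y) \<le> L * norm (x - y)"
proof -
  have "continuous_on K (\<lambda>x. \<Sum>b\<in>Basis. norm (frechet_derivative g (at x) b))"
    using pc K(3) by (intro continuous_intros) (auto intro: continuous_on_subset)
  from bound_compact[OF this K(1)] obtain M where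
    M: "\<And>x. x \<in> K \<Longrightarrow> norm (\<Sum>b\<in>Basis. norm (frechet_derivative g (at x) b)) \<le> M" by blast
  have der: "(g has_derivative frechet_derivative g (at x)) (at x within K)" if "x \<in> K" for x
  proof -
    have "g differentiable (at x)" using dg S K(3) that
      by (meson differentiable_on_eq_differentiable_at subsetD)
    then show ?thesis using frechet_derivative_works has_derivative_at_withinI by blast
  qed
  have on: "onorm (frechet_derivative g (at x)) \<le> M" if "x \<in> K" for x
  proof (rule onorm_le)
    fix h
    have lin: "linear (frechet_derivative g (at x))"
      using der[OF that] has_derivative_linear
      by (metis S K(3) dg differentiable_on_eq_differentiable_at frechet_derivative_works subsetD that)
    have "norm (frechet_derivative g (at x) h) \<le> norm h * (\<Sum>b\<in>Basis. norm (frechet_derivative g (at x) b))"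
      by (rule norm_lin_bound[OF lin])
    also have "\<dots> \<le> norm h * M" using M[OF that] by (intro mult_left_mono) auto
    finally show "norm (frechet_derivative g (at x) h) \<le> M * norm h" by (simp add: mult.commute)
  qed
  have "norm (g x - g y) \<le> max M 0 * norm (x - y)" if "x \<in> K" "y \<in> K" for x y
  proof -
    have "norm (g x - g y) \<le> M * norm (x - y)" using differentiable_bound[OF K(2) der on] that by blast
    also have "\<dots> \<le> max M 0 * norm (x - y)" by (intro mult_right_mono) auto
    finally show ?thesis .
  qed
  then show ?thesis by (intro exI[of _ "max M 0"]) auto
qed

lemma deriv_radial_zero:
  fixes A :: "'a::euclidean_space \<Rightarrow> 'b::real_normed_vector"
  assumes scale: "\<And>\<alpha> v. \<alpha> \<noteq> 0 \<Longrightarrow> A (\<alpha> *\<^sub>R v) = A v"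
    and dA: "(A has_derivative DA) (at w)"
  shows "DA w = 0"
proof -
  have d1: "((\<lambda>t::real. w + t *\<^sub>R w) has_derivative (\<lambda>t. t *\<^sub>R w)) (at 0)"
    by (auto intro!: derivative_eq_intros)
  have "((\<lambda>t::real. A (w + t *\<^sub>R w)) has_derivative (\<lambda>t. DA (t *\<^sub>R w))) (at 0)"
    using has_derivative_compose[OF d1, of A DA] dA by (simp add: o_def)
  moreover have "((\<lambda>t::real. A (w + t *\<^sub>R w)) has_derivative (\<lambda>t. 0)) (at 0)"
  proof (rule has_derivative_transform_within_open[of "\<lambda>t. A w" _ 0 UNIV "{t. t > -1}"])
    show "((\<lambda>t. A w) has_derivative (\<lambda>t. 0)) (at 0)" by simp
    show "open {t::real. t > -1}" by (simp add: open_Collect_less)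
    show "(0::real) \<in> {t. t > -1}" by simp
    fix t :: real assume "t \<in> {t. t > -1}"
    then have "1 + t \<noteq> 0" by auto
    then show "A w = A (w + t *\<^sub>R w)" using scale[of "1+t" w] by (simp add: algebra_simps)
  qed
  ultimately have "(\<lambda>t. DA (t *\<^sub>R w)) = (\<lambda>t. 0)" using has_derivative_unique by blast
  then show ?thesis by (metis scaleR_one)
qed



lemma normalize_taylor:
  fixes u d :: "'a::real_inner"
  assumes u: "norm u = 1" and c: "c > 0" and dc: "norm d \<le> c/2"
  shows "norm ((1 / norm (c *\<^sub>R u + d)) *\<^sub>R (c *\<^sub>R u + d) - u - (1/c) *\<^sub>R (d - (u \<bullet> d) *\<^sub>R u))
         \<le> 6 / c^2 * (norm d)^2"
proof -
  define t where "t = u \<bullet> d"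
  define w where "w = d - t *\<^sub>R u"
  define a where "a = c + t"
  define D where "D = norm d"
  define W where "W = norm w"
  define x where "x = c *\<^sub>R u + d"
  define n where "n = norm x"
  have uu: "u \<bullet> u = 1" using u by (simp add: norm_eq_sqrt_inner)
  have uw: "u \<bullet> w = 0" by (simp add: w_def t_def inner_diff_right uu)
  have tD: "\<bar>t\<bar> \<le> D" unfolding t_def D_def using Cauchy_Schwarz_ineq2[of u d] u by simp
  have D0: "D \<ge> 0" by (simp add: D_def)
  have Dc: "D \<le> c/2" using dc by (simp add: D_def)
  have a: "a \<ge> c/2" using tD Dc by (simp add: a_def)
  have W0: "W \<ge> 0" by (simp add: W_def)
  have dd: "d = t *\<^sub>R u + w" by (simp add: w_def)
  have WD2: "W^2 = D^2 - t^2"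
  proof -
    have "D^2 = d \<bullet> d" by (simp add: D_def dot_square_norm)
    also have "\<dots> = t^2 + w \<bullet> w" unfolding dd
      by (simp add: inner_add_left inner_add_right uu uw inner_commute power2_eq_square)
    finally show ?thesis by (simp add: W_def dot_square_norm)
  qed
  have "W^2 \<le> D^2" using WD2 by simp
  then have WD: "W \<le> D" using power2_le_imp_le D0 by blast
  have xx: "x = a *\<^sub>R u + w" by (simp add: x_def a_def dd scaleR_add_left)
  have n2: "n^2 = a^2 + W^2"
  proof -
    have "n^2 = x \<bullet> x" by (simp add: n_def dot_square_norm)
    also have "\<dots> = a^2 + w \<bullet> w" unfolding xx
      by (simp add: inner_add_left inner_add_right uu uw inner_commute power2_eq_square)
    finally show ?thesis by (simp add: W_def dot_square_norm)
  qed
  have n0: "n \<ge> 0" by (simp add: n_def)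
  have "a^2 \<le> n^2" using n2 by simp
  then have na: "n \<ge> a" using power2_le_imp_le n0 by blast
  have apos: "a > 0" using a c by simp
  have npos: "n > 0" using na apos by simp
  have nma: "(n - a) * (n + a) = W^2" using n2 by (simp add: algebra_simps power2_eq_square)
  have nma_b: "n - a \<le> W^2 / c"
  proof -
    have "(n - a) * c \<le> (n - a) * (n + a)" using na a by (intro mult_left_mono) auto
    then have "(n - a) * c \<le> W^2" using nma by simp
    then show ?thesis using c by (simp add: field_simps)
  qed
  have t1: "\<bar>a / n - 1\<bar> \<le> 2 * D^2 / c^2"
  proof -
    have "\<bar>a / n - 1\<bar> = (n - a) / n" using na npos by (simp add: field_simps)
    also have "\<dots> \<le> (W^2 / c) / (c/2)"
      using nma_b na a npos c by (intro frac_le) auto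
    also have "\<dots> = 2 * W^2 / c^2" by (simp add: power2_eq_square field_simps)
    also have "\<dots> \<le> 2 * D^2 / c^2" using WD W0 c by (intro divide_right_mono mult_left_mono power_mono) auto
    finally show ?thesis .
  qed
  have W2c: "W^2 / c \<le> D / 2"
  proof -
    have "W^2 \<le> D * D" using WD W0 by (simp add: power2_eq_square mult_mono)
    also have "\<dots> \<le> D * (c/2)" using Dc D0 by (intro mult_left_mono) auto
    finally show ?thesis using c by (simp add: field_simps)
  qed
  have nc: "\<bar>n - c\<bar> \<le> 3/2 * D" 
  proof -
    have "n - c \<le> 3/2 * D" using nma_b W2c tD unfolding a_def by linarith
    moreover have "c - n \<le> 3/2 * D" using na tD D0 unfolding a_def by linarith
    ultimately show ?thesis by linarith
  qed
  have t2: "\<bar>1/n - 1/c\<bar> * W \<le> 3 * D^2 / c^2"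
  proof -
    have "\<bar>1/n - 1/c\<bar> = \<bar>n - c\<bar> / (n * c)" using npos c by (simp add: field_simps abs_div abs_minus_commute)
    then have "\<bar>1/n - 1/c\<bar> * W = (\<bar>n - c\<bar> * W) / (n * c)" by simp
    also have "\<dots> \<le> (3/2 * D * D) / ((c/2) * c)"
      using nc WD W0 na a c npos by (intro frac_le mult_mono mult_pos_pos mult_right_mono) auto
    also have "\<dots> = 3 * D^2 / c^2" by (simp add: power2_eq_square field_simps)
    finally show ?thesis .
  qed
  have eq: "(1 / norm (c *\<^sub>R u + d)) *\<^sub>R (c *\<^sub>R u + d) - u - (1/c) *\<^sub>R (d - (u \<bullet> d) *\<^sub>R u)
      = (a / n - 1) *\<^sub>R u + (1/n - 1/c) *\<^sub>R w"
  proof -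
    have "(1 / norm (c *\<^sub>R u + d)) *\<^sub>R (c *\<^sub>R u + d) - u - (1/c) *\<^sub>R (d - (u \<bullet> d) *\<^sub>R u)
       = (1/n) *\<^sub>R (a *\<^sub>R u + w) - u - (1/c) *\<^sub>R w"
      unfolding n_def x_def[symmetric] t_def[symmetric] w_def[symmetric] xx ..
    also have "\<dots> = (a / n - 1) *\<^sub>R u + (1/n - 1/c) *\<^sub>R w"
      by (simp add: scaleR_add_right scaleR_diff_left scaleR_scaleR algebra_simps)
    finally show ?thesis .
  qed
  have "norm ((a / n - 1) *\<^sub>R u + (1/n - 1/c) *\<^sub>R w) \<le> \<bar>a / n - 1\<bar> + \<bar>1/n - 1/c\<bar> * W"
    using norm_triangle_ineq[of "(a / n - 1) *\<^sub>R u" "(1/n - 1/c) *\<^sub>R w"] u by (simp add: W_def)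
  also have "\<dots> \<le> 5 * D^2 / c^2" using t1 t2 by simp
  also have "\<dots> \<le> 6 * D^2 / c^2" using c by (intro divide_right_mono) auto
  finally show ?thesis unfolding eq by (simp add: D_def)
qed



lemma Jfacts:
  fixes A :: "real^'n \<Rightarrow> real^'n^'n"
  assumes scale: "\<And>\<alpha> v. \<alpha> \<noteq> 0 \<Longrightarrow> A (\<alpha> *\<^sub>R v) = A v"
    and dA: "A differentiable (at w)"
  shows "\<And>h. Jmat A w *v h = A w *v h + frechet_derivative A (at w) h *v w"
    and "((\<lambda>w. A w *v w) has_derivative (\<lambda>h. Jmat A w *v h)) (at w)"
    and "Jmat A w *v w = A w *v w"
proof -
  have hA: "(A has_derivative frechet_derivative A (at w)) (at w)"
    using dA frechet_derivative_works by blast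
  have hf: "((\<lambda>w. A w *v w) has_derivative (\<lambda>h. A w *v h + frechet_derivative A (at w) h *v w)) (at w)"
    using bounded_bilinear.FDERIV[OF bb_mv hA has_derivative_ident] by simp
  then have "(\<lambda>w. A w *v w) differentiable (at w)" unfolding differentiable_def by blast
  then have hJ: "((\<lambda>w. A w *v w) has_derivative (\<lambda>h. Jmat A w *v h)) (at w)"
    unfolding Jmat_def using jacobian_works by blast
  then show "((\<lambda>w. A w *v w) has_derivative (\<lambda>h. Jmat A w *v h)) (at w)" .
  have eq: "(\<lambda>h. Jmat A w *v h) = (\<lambda>h. A w *v h + frechet_derivative A (at w) h *v w)"
    using has_derivative_unique[OF hJ hf] .
  show "\<And>h. Jmat A w *v h = A w *v h + frechet_derivative A (at w) h *v w"
    using fun_cong[OF eq] by simp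
  have "frechet_derivative A (at w) w = 0" using deriv_radial_zero[OF scale hA] .
  then show "Jmat A w *v w = A w *v w" using fun_cong[OF eq, of w] by simp
qed



lemma J_lipschitz:
  fixes A :: "real^'n \<Rightarrow> real^'n^'n" and vs :: "real^'n"
  assumes smooth: "Ck_on 3 (UNIV - {0}) A"
    and scale: "\<And>\<alpha> v. \<alpha> \<noteq> 0 \<Longrightarrow> A (\<alpha> *\<^sub>R v) = A v"
    and unit: "norm vs = 1"
  shows "\<exists>LJ\<ge>0. \<forall>w\<in>cball vs (1/2). \<forall>w'\<in>cball vs (1/2). \<forall>y.
           norm (Jmat A w *v y - Jmat A w' *v y) \<le> LJ * norm (w - w') * norm y"
proof -
  define S :: "(real^'n) set" where "S = UNIV - {0}"
  define K where "K = cball vs (1/2)"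
  define P where "P = (\<lambda>b w. frechet_derivative A (at w) b)"
  have So: "open S" by (simp add: S_def open_Diff)
  have KS: "K \<subseteq> S"
  proof
    fix w assume "w \<in> K"
    then have "norm (vs - w) \<le> 1/2" by (simp add: K_def dist_norm)
    then have "w \<noteq> 0" using unit by auto
    then show "w \<in> S" by (simp add: S_def)
  qed
  have Kc: "compact K" "convex K" by (simp_all add: K_def)
  have wn: "norm w \<le> 2" if "w \<in> K" for w
  proof -
    have "norm (vs - w) \<le> 1/2" using that by (simp add: K_def dist_norm)
    then show ?thesis using unit norm_triangle_ineq4[of vs "vs - w"] by simp
  qed
  have sm: "A differentiable_on S" "\<forall>b\<in>Basis. P b differentiable_on S \<and>
      (\<forall>c\<in>Basis. continuous_on S (\<lambda>x. frechet_derivative (P b) (at x) c))"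
    using smooth unfolding S_def[symmetric] P_def
    by (auto simp: numeral_3_eq_3 numeral_2_eq_2 intro: differentiable_imp_continuous_on)
  have dA: "A differentiable (at w)" if "w \<in> K" for w
    using sm(1) So KS that by (meson differentiable_on_eq_differentiable_at subsetD)
  have linA: "linear (frechet_derivative A (at w))" if "w \<in> K" for w
    using dA[OF that] frechet_derivative_works has_derivative_linear by blast
  have Pc: "continuous_on S (\<lambda>x. frechet_derivative A (at x) b)" if "b \<in> Basis" for b
    using sm(2) that unfolding P_def by (auto intro: differentiable_imp_continuous_on)
  obtain LA where LA: "LA \<ge> 0" "\<forall>x\<in>K. \<forall>y\<in>K. norm (A x - A y) \<le> LA * norm (x - y)"
    using lip_from_partials[OF So sm(1) _ Kc KS] Pc by blast
  have "\<forall>b\<in>Basis. \<exists>L\<ge>0. \<forall>x\<in>K. \<forall>y\<in>K. norm (P b x - P b y) \<le> L * norm (x - y)"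
    using sm(2) by (auto intro!: lip_from_partials[OF So _ _ Kc KS])
  then obtain Lp where Lp: "\<And>b. b \<in> Basis \<Longrightarrow> Lp b \<ge> 0"
      "\<And>b x y. b \<in> Basis \<Longrightarrow> x \<in> K \<Longrightarrow> y \<in> K \<Longrightarrow> norm (P b x - P b y) \<le> Lp b * norm (x - y)"
    by metis
  define Ls where "Ls = (\<Sum>b\<in>Basis. Lp b)"
  have Ls0: "Ls \<ge> 0" unfolding Ls_def using Lp(1) by (simp add: sum_nonneg)
  have "continuous_on K (\<lambda>x. \<Sum>b\<in>Basis. norm (P b x))"
    using Pc KS unfolding P_def by (intro continuous_intros) (auto intro: continuous_on_subset)
  from bound_compact[OF this Kc(1)] obtain BP where BP: "BP \<ge> 0"
    "\<And>x. x \<in> K \<Longrightarrow> norm (\<Sum>b\<in>Basis. norm (P b x)) \<le> BP" by blast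
  obtain Kb where Kb: "Kb > 0" "\<And>(M::real^'n^'n) (x::real^'n). norm (M *v x) \<le> norm M * norm x * Kb"
    using bounded_bilinear.pos_bounded[OF bb_mv] by blast
  define LJ where "LJ = Kb * (LA + 2 * Ls + BP)"
  have "norm (Jmat A w *v y - Jmat A w' *v y) \<le> LJ * norm (w - w') * norm y"
    if w: "w \<in> K" and w': "w' \<in> K" for w w' y
  proof -
    define DA where "DA = frechet_derivative A (at w)"
    define DA' where "DA' = frechet_derivative A (at w')"
    have e1: "DA y - DA' y = (\<Sum>b\<in>Basis. (y \<bullet> b) *\<^sub>R (P b w - P b w'))"
      unfolding DA_def DA'_def P_def
      by (subst lin_expand[OF linA[OF w]], subst lin_expand[OF linA[OF w']])
         (simp add: sum_subtractf scaleR_diff_right)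
    have b1: "norm (DA y - DA' y) \<le> norm y * Ls * norm (w - w')"
    proof -
      have "norm (DA y - DA' y) \<le> (\<Sum>b\<in>Basis. norm ((y \<bullet> b) *\<^sub>R (P b w - P b w')))"
        unfolding e1 by (rule norm_sum)
      also have "\<dots> \<le> (\<Sum>b\<in>Basis. norm y * (Lp b * norm (w - w')))"
        using Lp(2)[OF _ w w'] by (intro sum_mono) (auto intro!: mult_mono simp: Basis_le_norm)
      finally show ?thesis by (simp add: Ls_def sum_distrib_left sum_distrib_right mult.assoc)
    qed
    have b2: "norm (DA' y) \<le> norm y * BP"
    proof -
      have "norm (DA' y) \<le> norm y * (\<Sum>b\<in>Basis. norm (DA' b))"
        unfolding DA'_def by (rule norm_lin_bound[OF linA[OF w']])
      also have "\<dots> \<le> norm y * BP" using BP(2)[OF w'] unfolding DA'_def P_def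
        by (intro mult_left_mono) auto
      finally show ?thesis .
    qed
    have eq: "Jmat A w *v y - Jmat A w' *v y
        = (A w - A w') *v y + (DA y - DA' y) *v w + DA' y *v (w - w')"
      unfolding DA_def DA'_def
      by (simp add: Jfacts(1)[OF scale dA[OF w]] Jfacts(1)[OF scale dA[OF w']] matrix_vector_mult_diff_rdistrib matrix_vector_mult_diff_distrib)
    have "norm (Jmat A w *v y - Jmat A w' *v y)
        \<le> norm ((A w - A w') *v y) + norm ((DA y - DA' y) *v w) + norm (DA' y *v (w - w'))"
      unfolding eq by (meson norm_triangle_le norm_triangle_ineq add_mono order_refl)
    also have "\<dots> \<le> norm (A w - A w') * norm y * Kb + norm (DA y - DA' y) * norm w * Kb
         + norm (DA' y) * norm (w - w') * Kb"
      using Kb(2) by (intro add_mono) auto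
    also have "\<dots> \<le> (LA * norm (w - w')) * norm y * Kb + (norm y * Ls * norm (w - w')) * 2 * Kb
         + (norm y * BP) * norm (w - w') * Kb"
    proof -
      have "norm (A w - A w') * norm y * Kb \<le> (LA * norm (w - w')) * norm y * Kb"
        using LA(2) w w' Kb(1) by (intro mult_right_mono) auto
      moreover have "norm (DA y - DA' y) * norm w * Kb \<le> (norm y * Ls * norm (w - w')) * 2 * Kb"
        using b1 wn[OF w] Kb(1) Ls0 by (intro mult_right_mono mult_mono) auto
      moreover have "norm (DA' y) * norm (w - w') * Kb \<le> (norm y * BP) * norm (w - w') * Kb"
        using b2 Kb(1) by (intro mult_right_mono) auto
      ultimately show ?thesis by linarith
    qed
    also have "\<dots> = LJ * norm (w - w') * norm y" by (simp add: LJ_def algebra_simps)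
    finally show ?thesis .
  qed
  moreover have "LJ \<ge> 0" using Kb LA Ls0 BP by (simp add: LJ_def)
  ultimately show ?thesis unfolding K_def by blast
qed



lemma main_est:
  fixes A :: "real^'n \<Rightarrow> real^'n^'n"
    and lam \<sigma> :: real and vstar :: "real^'n"
  assumes smooth: "Ck_on 3 (UNIV - {0}) A"
    and scale: "\<And>\<alpha> v. \<alpha> \<noteq> 0 \<Longrightarrow> A (\<alpha> *\<^sub>R v) = A v"
    and eig: "A vstar *v vstar = lam *\<^sub>R vstar"
    and unit: "norm vstar = 1"
    and nonsing: "invertible (Jmat A vstar - \<sigma> *\<^sub>R mat 1)"
  shows "lam \<noteq> \<sigma> \<and> (\<exists>C \<delta>. \<delta> > 0 \<and> (\<forall>v. norm (v - vstar) < \<delta> \<longrightarrow>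
     norm (phi A \<sigma> v - sgn (lam - \<sigma>) *\<^sub>R vstar
       - (\<bar>lam - \<sigma>\<bar> *\<^sub>R ((mat 1 - outer vstar vstar) ** matrix_inv (Jmat A vstar - \<sigma> *\<^sub>R mat 1))) *v (v - vstar))
     \<le> C * (norm (v - vstar))\<^sup>2))"
proof -
  define K where "K = cball vstar (1/2)"
  define J where "J = Jmat A"
  define \<mu> where "\<mu> = lam - \<sigma>"
  define Mst where "Mst = J vstar - \<sigma> *\<^sub>R mat 1"
  define N where "N = matrix_inv Mst"
  define D where "D = \<bar>\<mu>\<bar> *\<^sub>R ((mat 1 - outer vstar vstar) ** N)"
  have inS: "w \<noteq> 0" if "w \<in> K" for w
  proof -
    have "norm (vstar - w) \<le> 1/2" using that by (simp add: K_def dist_norm)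
    then show ?thesis using unit by auto
  qed
  have sm1: "A differentiable_on (UNIV - {0})" using smooth by (simp add: numeral_3_eq_3)
  have dA: "A differentiable (at w)" if "w \<noteq> 0" for w
    using sm1 that by (meson differentiable_on_eq_differentiable_at open_delete open_UNIV DiffI UNIV_I singletonD)
  obtain LJ where LJ: "LJ \<ge> 0" "\<And>w w' y. w \<in> K \<Longrightarrow> w' \<in> K \<Longrightarrow> norm (J w *v y - J w' *v y) \<le> LJ * norm (w - w') * norm y"
    using J_lipschitz[OF smooth scale unit] unfolding K_def J_def by blast
  have vK: "vstar \<in> K" by (simp add: K_def)
  have v0: "vstar \<noteq> 0" using unit by auto
  have Jv: "J vstar *v vstar = lam *\<^sub>R vstar"
    using Jfacts(3)[OF scale dA[OF v0]] eig by (simp add: J_def)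
  have Mv: "Mst *v vstar = \<mu> *\<^sub>R vstar"
    unfolding Mst_def mv_sub_smat Jv \<mu>_def by (simp add: scaleR_diff_left)
  have inv: "Mst ** N = mat 1" "N ** Mst = mat 1"
    using matrix_inv_props[OF nonsing] by (simp_all add: N_def Mst_def J_def)
  have NM: "N *v (Mst *v y) = y" for y using inv(2) by (simp add: matrix_vector_mul_assoc)
  have MN: "Mst *v (N *v y) = y" for y using inv(1) by (simp add: matrix_vector_mul_assoc)
  have mu0: "\<mu> \<noteq> 0"
  proof
    assume "\<mu> = 0"
    then have "Mst *v vstar = 0" using Mv by simp
    then have "vstar = 0" using NM[of vstar] by simp
    then show False using v0 by simp
  qed
  obtain KN where KN: "KN > 0" "\<And>z. norm (N *v z) \<le> norm z * KN"
    using bounded_linear.pos_bounded[OF matrix_vector_mul_bounded_linear[of N]] by blast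
  have lowM: "norm y \<le> norm (Mst *v y) * KN" for y using KN(2)[of "Mst *v y"] NM[of y] by simp
  have rbound: "norm (J v *v vstar - lam *\<^sub>R vstar) \<le> LJ * (norm (v - vstar))^2" if vK': "v \<in> K" for v
  proof -
    define G where "G = (\<lambda>t. vstar + t *\<^sub>R (v - vstar)) ` {0..1::real}"
    have hvK: "norm (v - vstar) \<le> 1/2" using vK' by (simp add: K_def dist_norm norm_minus_commute)
    have GK: "x \<in> K" if "x \<in> G" for x
    proof -
      obtain t where t: "t \<in> {0..1}" "x = vstar + t *\<^sub>R (v - vstar)" using \<open>x \<in> G\<close> G_def by blast
      have "\<bar>t\<bar> * norm (v - vstar) \<le> 1 * (1/2)" using t(1) hvK by (intro mult_mono) auto
      then have "norm (t *\<^sub>R (v - vstar)) \<le> 1 * (1/2)" by simp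
      then show ?thesis using t by (simp add: K_def dist_norm)
    qed
    have Gd: "norm (x - v) \<le> norm (v - vstar)" if "x \<in> G" for x
    proof -
      obtain t where t: "t \<in> {0..1}" "x = vstar + t *\<^sub>R (v - vstar)" using \<open>x \<in> G\<close> G_def by blast
      have "x - v = (t - 1) *\<^sub>R (v - vstar)" using t(2) by (simp add: algebra_simps)
      then have "norm (x - v) = \<bar>t - 1\<bar> * norm (v - vstar)" by simp
      also have "\<dots> \<le> 1 * norm (v - vstar)" using t(1) by (intro mult_right_mono) auto
      finally show ?thesis by simp
    qed
    have der: "((\<lambda>w. A w *v w) has_derivative (\<lambda>h. J x *v h)) (at x within G)" if "x \<in> G" for x
      using Jfacts(2)[OF scale dA[OF inS[OF GK[OF that]]]] unfolding J_def
      by (rule has_derivative_at_withinI)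
    have ob: "onorm ((\<lambda>h. J x *v h) - (\<lambda>h. J v *v h)) \<le> LJ * norm (v - vstar)" if "x \<in> G" for x
    proof (rule onorm_le)
      fix h
      have "norm (J x *v h - J v *v h) \<le> LJ * norm (x - v) * norm h" using LJ(2)[OF GK[OF that] vK'] .
      also have "\<dots> \<le> LJ * norm (v - vstar) * norm h"
        using Gd[OF that] LJ(1) by (intro mult_right_mono mult_left_mono) auto
      finally show "norm (((\<lambda>h. J x *v h) - (\<lambda>h. J v *v h)) h) \<le> LJ * norm (v - vstar) * norm h"
        by simp
    qed
    have vG: "v \<in> G" unfolding G_def by (rule image_eqI[of _ _ 1]) auto
    have "norm ((A v *v v) - (A vstar *v vstar) - J v *v (v - vstar)) \<le> norm (v - vstar) * (LJ * norm (v - vstar))"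
      by (rule differentiable_bound_linearization[where S=G and f'="\<lambda>x h. J x *v h", OF _ der ob vG])
         (auto simp: G_def)
    moreover have "(A v *v v) - (A vstar *v vstar) - J v *v (v - vstar) = J v *v vstar - lam *\<^sub>R vstar"
      using Jfacts(3)[OF scale dA[OF inS[OF vK']]] eig unfolding J_def
      by (simp add: matrix_vector_mult_diff_distrib)
    ultimately show ?thesis by (simp add: power2_eq_square mult_ac)
  qed
  define C1 where "C1 = 2 * KN * (LJ / \<bar>\<mu>\<bar> + LJ * KN)"
  define C where "C = 6 * \<mu>^2 * (KN + C1)^2 + 2 * \<bar>\<mu>\<bar> * C1"
  define \<delta> where "\<delta> = min (1/2) (min (1 / (2 * KN * (LJ + 1))) (1 / (2 * \<bar>\<mu>\<bar> * (KN + C1 + 1))))"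
  have C10: "C1 \<ge> 0" using KN LJ by (simp add: C1_def)
  have \<delta>0: "\<delta> > 0" using KN LJ C10 mu0 by (simp add: \<delta>_def)
  have main: "norm (phi A \<sigma> v - sgn \<mu> *\<^sub>R vstar - D *v (v - vstar)) \<le> C * (norm (v - vstar))\<^sup>2"
    if hv: "norm (v - vstar) < \<delta>" for v
  proof -
    define h where "h = v - vstar"
    define nh where "nh = norm h"
    have nh0: "nh \<ge> 0" by (simp add: nh_def)
    have dl: "\<delta> \<le> 1/2" "\<delta> \<le> 1 / (2 * KN * (LJ + 1))" "\<delta> \<le> 1 / (2 * \<bar>\<mu>\<bar> * (KN + C1 + 1))"
      unfolding \<delta>_def by auto
    have hv': "nh < \<delta>" using hv by (simp add: nh_def h_def)
    have nh1: "nh \<le> 1/2" "nh \<le> 1" using hv' dl by linarith+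
    have nh2: "nh < 1 / (2 * KN * (LJ + 1))" using hv' dl by linarith
    have nh3: "nh < 1 / (2 * \<bar>\<mu>\<bar> * (KN + C1 + 1))" using hv' dl by linarith
    have vK': "v \<in> K" using nh1 by (simp add: K_def dist_norm nh_def h_def norm_minus_commute)
    have Eb: "norm (J v *v y - J vstar *v y) \<le> LJ * nh * norm y" for y
      using LJ(2)[OF vK' vK] by (simp add: nh_def h_def)
    have LKh: "LJ * nh * KN \<le> 1/2"
    proof -
      have "LJ * nh \<le> (LJ + 1) * nh" using nh0 by (simp add: algebra_simps)
      also have "\<dots> \<le> (LJ + 1) * (1 / (2 * KN * (LJ + 1)))" using nh2 LJ(1) by (intro mult_left_mono) auto
      also have "\<dots> = 1 / (2 * KN)"
      proof -
        have "KN \<noteq> 0" "LJ + 1 \<noteq> 0" using LJ(1) KN(1) by auto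
        then show ?thesis by simp
      qed
      finally show ?thesis using KN(1) by (simp add: field_simps)
    qed
    define Mvm where "Mvm = J v - \<sigma> *\<^sub>R mat 1"
    have Mvm_eq: "Mvm *v y = Mst *v y + (J v *v y - J vstar *v y)" for y
      by (simp add: Mvm_def Mst_def mv_sub_smat)
    have low: "norm y \<le> 2 * KN * norm (Mvm *v y)" for y
    proof -
      have "norm (Mst *v y) \<le> norm (Mvm *v y) + LJ * nh * norm y"
        using Mvm_eq[of y] Eb[of y] norm_triangle_ineq4[of "Mvm *v y" "J v *v y - J vstar *v y"]
        by (smt (verit, best) add_diff_cancel_right')
      then have "norm y \<le> (norm (Mvm *v y) + LJ * nh * norm y) * KN"
        using lowM[of y] KN(1) by (smt (verit, best) mult_right_mono)
      also have "\<dots> = KN * norm (Mvm *v y) + (LJ * nh * KN) * norm y" by (simp add: algebra_simps)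
      also have "\<dots> \<le> KN * norm (Mvm *v y) + 1/2 * norm y" using LKh by (intro add_left_mono mult_right_mono) auto
      finally show ?thesis by simp
    qed
    have invM: "invertible Mvm"
      unfolding invertible_left_inverse matrix_left_invertible_ker
      using low by (metis mult_zero_right norm_le_zero_iff norm_zero)
    define x where "x = matrix_inv Mvm *v v"
    have Mx: "Mvm *v x = v" using matrix_inv_props(1)[OF invM] by (simp add: x_def matrix_vector_mul_assoc)
    have phix: "phi A \<sigma> v = (1 / norm x) *\<^sub>R x"
      by (simp add: phi_def psi_def x_def Mvm_def J_def)
    define x0 where "x0 = (1/\<mu>) *\<^sub>R vstar + N *v h"
    define q where "q = (1/\<mu>) *\<^sub>R (J v *v vstar - lam *\<^sub>R vstar) + (J v *v (N *v h) - J vstar *v (N *v h))"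
    have Mx0: "Mvm *v x0 = v + q"
    proof -
      have "Mst *v x0 = v" using Mv mu0 MN[of h]
        by (simp add: x0_def matrix_vector_right_distrib matrix_vector_mult_scaleR h_def)
      moreover have "J v *v x0 - J vstar *v x0 = q"
        by (simp add: x0_def q_def matrix_vector_right_distrib matrix_vector_mult_scaleR Jv algebra_simps)
      ultimately show ?thesis using Mvm_eq[of x0] by simp
    qed
    have qb: "norm q \<le> (LJ / \<bar>\<mu>\<bar> + LJ * KN) * nh^2"
    proof -
      have "norm q \<le> norm ((1/\<mu>) *\<^sub>R (J v *v vstar - lam *\<^sub>R vstar)) + norm (J v *v (N *v h) - J vstar *v (N *v h))"
        unfolding q_def by (rule norm_triangle_ineq)
      also have "\<dots> \<le> (1/\<bar>\<mu>\<bar>) * (LJ * nh^2) + LJ * nh * (nh * KN)"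
      proof (rule add_mono)
        show "norm ((1/\<mu>) *\<^sub>R (J v *v vstar - lam *\<^sub>R vstar)) \<le> (1/\<bar>\<mu>\<bar>) * (LJ * nh^2)"
          using rbound[OF vK'] by (simp add: nh_def h_def divide_right_mono)
        show "norm (J v *v (N *v h) - J vstar *v (N *v h)) \<le> LJ * nh * (nh * KN)"
          using Eb[of "N *v h"] KN(2)[of h] LJ(1) nh0
          by (smt (verit, best) mult_left_mono nh_def zero_le_mult_iff)
      qed
      also have "\<dots> = (LJ / \<bar>\<mu>\<bar> + LJ * KN) * nh^2" by (simp add: power2_eq_square algebra_simps)
      finally show ?thesis .
    qed
    define e where "e = x - x0"
    have eb: "norm e \<le> C1 * nh^2"
    proof -
      have "Mvm *v e = - q" using Mx Mx0 by (simp add: e_def matrix_vector_mult_diff_distrib)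
      then have "norm e \<le> 2 * KN * norm q" using low[of e] by simp
      also have "\<dots> \<le> 2 * KN * ((LJ / \<bar>\<mu>\<bar> + LJ * KN) * nh^2)" using qb KN(1) by (intro mult_left_mono) auto
      finally show ?thesis by (simp add: C1_def)
    qed
    define d where "d = N *v h + e"
    have xd: "x = (1/\<mu>) *\<^sub>R vstar + d" by (simp add: d_def e_def x0_def)
    have db: "norm d \<le> (KN + C1) * nh"
    proof -
      have "norm d \<le> nh * KN + C1 * nh^2" unfolding d_def using norm_triangle_ineq[of "N *v h" e] KN(2)[of h] eb
        by (simp add: nh_def)
      also have "C1 * nh^2 \<le> C1 * nh" 
      proof -
        have "nh * nh \<le> nh" using nh0 nh1 by (simp add: mult_left_le_one_le)
        then show ?thesis using C10 by (simp add: power2_eq_square mult_left_mono)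
      qed
      then have "nh * KN + C1 * nh^2 \<le> (KN + C1) * nh" by (simp add: algebra_simps)
      finally show ?thesis .
    qed
    define c where "c = 1 / \<bar>\<mu>\<bar>"
    define u where "u = sgn \<mu> *\<^sub>R vstar"
    have c0: "c > 0" using mu0 by (simp add: c_def)
    have un: "norm u = 1" using unit mu0 by (simp add: u_def abs_sgn_eq)
    have cu: "c *\<^sub>R u = (1/\<mu>) *\<^sub>R vstar" using mu0 by (auto simp: c_def u_def sgn_if)
    have dc: "norm d \<le> c/2"
    proof -
      have "norm d \<le> (KN + C1 + 1) * nh" using db nh0 by (smt (verit) mult_right_mono)
      also have "\<dots> \<le> (KN + C1 + 1) * (1 / (2 * \<bar>\<mu>\<bar> * (KN + C1 + 1)))"
        using nh3 KN(1) C10 by (intro mult_left_mono) auto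
      also have "\<dots> = c / 2"
      proof -
        have "KN + C1 + 1 \<noteq> 0" using KN(1) C10 by auto
        then show ?thesis using mu0 by (simp add: c_def)
      qed
      finally show ?thesis .
    qed
    have NT: "norm ((1 / norm (c *\<^sub>R u + d)) *\<^sub>R (c *\<^sub>R u + d) - u - (1/c) *\<^sub>R (d - (u \<bullet> d) *\<^sub>R u))
         \<le> 6 / c^2 * (norm d)^2" by (rule normalize_taylor[OF un c0 dc])
    have ss: "sgn \<mu> * sgn \<mu> = 1" using mu0 by (simp add: sgn_if)
    have P1: "(1/c) *\<^sub>R (d - (u \<bullet> d) *\<^sub>R u) = \<bar>\<mu>\<bar> *\<^sub>R (d - (vstar \<bullet> d) *\<^sub>R vstar)"
      using ss by (simp add: c_def u_def)
    have Dh: "D *v h = \<bar>\<mu>\<bar> *\<^sub>R (N *v h - (vstar \<bullet> (N *v h)) *\<^sub>R vstar)"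
      by (simp add: D_def bounded_bilinear.scaleR_left[OF bb_mv] matrix_vector_mul_assoc[symmetric]
          matrix_vector_mult_diff_rdistrib outer_mv)
    have P2: "\<bar>\<mu>\<bar> *\<^sub>R (d - (vstar \<bullet> d) *\<^sub>R vstar) - D *v h = \<bar>\<mu>\<bar> *\<^sub>R (e - (vstar \<bullet> e) *\<^sub>R vstar)"
      unfolding Dh d_def by (simp add: inner_add_right algebra_simps)
    have eb2: "norm (e - (vstar \<bullet> e) *\<^sub>R vstar) \<le> 2 * norm e"
    proof -
      have "norm (e - (vstar \<bullet> e) *\<^sub>R vstar) \<le> norm e + \<bar>vstar \<bullet> e\<bar>"
        using norm_triangle_ineq4[of e "(vstar \<bullet> e) *\<^sub>R vstar"] unit by simp
      also have "\<bar>vstar \<bullet> e\<bar> \<le> norm e" using Cauchy_Schwarz_ineq2[of vstar e] unit by simp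
      finally show ?thesis by simp
    qed
    have split: "phi A \<sigma> v - sgn \<mu> *\<^sub>R vstar - D *v (v - vstar)
       = ((1 / norm (c *\<^sub>R u + d)) *\<^sub>R (c *\<^sub>R u + d) - u - (1/c) *\<^sub>R (d - (u \<bullet> d) *\<^sub>R u))
         + \<bar>\<mu>\<bar> *\<^sub>R (e - (vstar \<bullet> e) *\<^sub>R vstar)"
      unfolding phix xd cu[symmetric] h_def[symmetric] P1 P2[symmetric] by (simp add: u_def)
    have "norm (phi A \<sigma> v - sgn \<mu> *\<^sub>R vstar - D *v (v - vstar))
        \<le> 6 / c^2 * (norm d)^2 + \<bar>\<mu>\<bar> * (2 * norm e)"
      unfolding split using NT eb2 norm_triangle_ineq[of "(1 / norm (c *\<^sub>R u + d)) *\<^sub>R (c *\<^sub>R u + d) - u - (1/c) *\<^sub>R (d - (u \<bullet> d) *\<^sub>R u)"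
          "\<bar>\<mu>\<bar> *\<^sub>R (e - (vstar \<bullet> e) *\<^sub>R vstar)"]
      by (smt (verit, best) abs_ge_zero mult_left_mono norm_scaleR)
    also have "\<dots> \<le> 6 * \<mu>^2 * ((KN + C1) * nh)^2 + \<bar>\<mu>\<bar> * (2 * (C1 * nh^2))"
    proof (rule add_mono)
      have "6 / c^2 = 6 * \<mu>^2" using mu0 by (simp add: c_def power2_eq_square)
      moreover have "(norm d)^2 \<le> ((KN + C1) * nh)^2" using db by (intro power_mono) auto
      ultimately show "6 / c^2 * (norm d)^2 \<le> 6 * \<mu>^2 * ((KN + C1) * nh)^2"
        by (simp add: mult_left_mono)
      show "\<bar>\<mu>\<bar> * (2 * norm e) \<le> \<bar>\<mu>\<bar> * (2 * (C1 * nh^2))" using eb by (intro mult_left_mono) auto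
    qed
    also have "\<dots> = C * nh^2" unfolding C_def power_mult_distrib by (simp add: algebra_simps)
    also have "\<dots> = C * (norm (v - vstar))\<^sup>2" by (simp add: nh_def h_def)
    finally show ?thesis .
  qed
  have "lam \<noteq> \<sigma>" using mu0 by (simp add: \<mu>_def)
  then show ?thesis using \<delta>0 main unfolding \<mu>_def D_def N_def Mst_def J_def by blast
qed



theorem theorem3:
  fixes A :: "real^'n \<Rightarrow> real^'n^'n"
    and lam \<sigma> :: real and vstar :: "real^'n"
  assumes sym: "\<And>v. transpose (A v) = A v"
    and smooth: "Ck_on 3 (UNIV - {0}) A"
    and scale: "\<And>\<alpha> v. \<alpha> \<noteq> 0 \<Longrightarrow> A (\<alpha> *\<^sub>R v) = A v"
    and eig: "A vstar *v vstar = lam *\<^sub>R vstar"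
    and unit: "norm vstar = 1"
    and nonsing: "invertible (Jmat A vstar - \<sigma> *\<^sub>R mat 1)"
  shows "phi A \<sigma> differentiable (at vstar) \<and>
         jacobian (phi A \<sigma>) (at vstar) =
           \<bar>lam - \<sigma>\<bar> *\<^sub>R ((mat 1 - outer vstar vstar) ** matrix_inv (Jmat A vstar - \<sigma> *\<^sub>R mat 1)) \<and>
         (\<forall>v :: nat \<Rightarrow> real^'n.
           (\<forall>k. invertible (Jmat A (v k) - \<sigma> *\<^sub>R mat 1)) \<longrightarrow>
           (\<forall>k. v (Suc k) = phi A \<sigma> (v k)) \<longrightarrow>
           (\<exists>C \<delta>. \<delta> > 0 \<and> (\<forall>k. norm (v k - vstar) < \<delta> \<longrightarrow>
              (\<sigma> < lam \<longrightarrow>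
                 norm ((v (Suc k) - vstar) - jacobian (phi A \<sigma>) (at vstar) *v (v k - vstar))
                   \<le> C * (norm (v k - vstar))\<^sup>2) \<and>
              (\<sigma> > lam \<longrightarrow>
                 norm ((v (Suc k) + vstar) - jacobian (phi A \<sigma>) (at vstar) *v (v k - vstar))
                   \<le> C * (norm (v k - vstar))\<^sup>2))))"
proof -
  define D where "D = \<bar>lam - \<sigma>\<bar> *\<^sub>R ((mat 1 - outer vstar vstar) ** matrix_inv (Jmat A vstar - \<sigma> *\<^sub>R mat 1))"
  define s where "s = sgn (lam - \<sigma>)"
  have ex: "\<exists>C \<delta>. \<delta> > 0 \<and> (\<forall>v. norm (v - vstar) < \<delta> \<longrightarrow>
      norm (phi A \<sigma> v - s *\<^sub>R vstar - D *v (v - vstar)) \<le> C * (norm (v - vstar))\<^sup>2)"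
    unfolding D_def s_def by (rule conjunct2[OF main_est[OF smooth scale eig unit nonsing]])
  then obtain C \<delta> where d0: "\<delta> > 0" and est0: "\<forall>v. norm (v - vstar) < \<delta> \<longrightarrow>
      norm (phi A \<sigma> v - s *\<^sub>R vstar - D *v (v - vstar)) \<le> C * (norm (v - vstar))\<^sup>2"
    by blast
  have est: "norm (phi A \<sigma> v - s *\<^sub>R vstar - D *v (v - vstar)) \<le> C * (norm (v - vstar))\<^sup>2"
    if "norm (v - vstar) < \<delta>" for v using est0 that by blast
  have p0: "phi A \<sigma> vstar = s *\<^sub>R vstar" using est[of vstar] d0 by simp
  have hd: "(phi A \<sigma> has_derivative (\<lambda>h. D *v h)) (at vstar)"
    unfolding has_derivative_at'
  proof (intro conjI allI impI)
    show "bounded_linear ((*v) D)" by simp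
    fix e :: real assume e: "e > 0"
    define C' where "C' = max C 1"
    have C': "C' > 0" "C \<le> C'" by (auto simp: C'_def)
    show "\<exists>d>0. \<forall>x'. 0 < norm (x' - vstar) \<and> norm (x' - vstar) < d \<longrightarrow>
        norm (phi A \<sigma> x' - phi A \<sigma> vstar - D *v (x' - vstar)) / norm (x' - vstar) < e"
    proof (intro exI[of _ "min \<delta> (e / C')"] conjI allI impI)
      show "min \<delta> (e / C') > 0" using d0 e C' by simp
      fix x' assume x': "0 < norm (x' - vstar) \<and> norm (x' - vstar) < min \<delta> (e / C')"
      have "norm (phi A \<sigma> x' - phi A \<sigma> vstar - D *v (x' - vstar)) \<le> C * (norm (x' - vstar))\<^sup>2"
      proof -
        have "norm (x' - vstar) < \<delta>" using x' by simp
        from est[OF this] show ?thesis unfolding p0 .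
      qed
      also have "\<dots> \<le> C' * (norm (x' - vstar))\<^sup>2" using C' by (intro mult_right_mono) auto
      finally have "norm (phi A \<sigma> x' - phi A \<sigma> vstar - D *v (x' - vstar)) / norm (x' - vstar)
          \<le> (C' * (norm (x' - vstar))\<^sup>2) / norm (x' - vstar)" using x' by (intro divide_right_mono) auto
      also have "\<dots> = C' * norm (x' - vstar)" using x' by (simp add: power2_eq_square)
      also have "\<dots> < C' * (e / C')" using x' C' by (intro mult_strict_left_mono) auto
      also have "\<dots> = e" using C' by simp
      finally show "norm (phi A \<sigma> x' - phi A \<sigma> vstar - D *v (x' - vstar)) / norm (x' - vstar) < e" .
    qed
  qed
  have diff: "phi A \<sigma> differentiable (at vstar)" using hd unfolding differentiable_def by blast
  have jac: "jacobian (phi A \<sigma>) (at vstar) = D"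
    unfolding jacobian_def frechet_derivative_at[OF hd, symmetric] by simp
  have iter: "\<exists>C \<delta>. \<delta> > 0 \<and> (\<forall>k. norm (v k - vstar) < \<delta> \<longrightarrow>
              (\<sigma> < lam \<longrightarrow>
                 norm ((v (Suc k) - vstar) - D *v (v k - vstar)) \<le> C * (norm (v k - vstar))\<^sup>2) \<and>
              (\<sigma> > lam \<longrightarrow>
                 norm ((v (Suc k) + vstar) - D *v (v k - vstar)) \<le> C * (norm (v k - vstar))\<^sup>2))"
    if vs: "\<forall>k. v (Suc k) = phi A \<sigma> (v k)" for v :: "nat \<Rightarrow> real^'n"
  proof -
    have A1: "norm ((v (Suc k) - vstar) - D *v (v k - vstar)) \<le> C * (norm (v k - vstar))\<^sup>2"
      if k: "norm (v k - vstar) < \<delta>" and "\<sigma> < lam" for k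
    proof -
      have "s = 1" using that by (simp add: s_def)
      moreover have "v (Suc k) = phi A \<sigma> (v k)" using vs by blast
      ultimately show ?thesis using est[OF k] by simp
    qed
    have A2: "norm ((v (Suc k) + vstar) - D *v (v k - vstar)) \<le> C * (norm (v k - vstar))\<^sup>2"
      if k: "norm (v k - vstar) < \<delta>" and "\<sigma> > lam" for k
    proof -
      have "s = -1" using that by (simp add: s_def)
      moreover have "v (Suc k) = phi A \<sigma> (v k)" using vs by blast
      ultimately show ?thesis using est[OF k] by simp
    qed
    show ?thesis
      apply (rule exI[of _ C], rule exI[of _ \<delta>])
      using d0 A1 A2 by auto
  qed
  show ?thesis
  proof (intro conjI allI impI)
    show "phi A \<sigma> differentiable (at vstar)" by (rule diff)
    show "jacobian (phi A \<sigma>) (at vstar) =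
           \<bar>lam - \<sigma>\<bar> *\<^sub>R ((mat 1 - outer vstar vstar) ** matrix_inv (Jmat A vstar - \<sigma> *\<^sub>R mat 1))"
      using jac by (simp add: D_def)
    fix v :: "nat \<Rightarrow> real^'n"
    assume "\<forall>k. v (Suc k) = phi A \<sigma> (v k)"
    then show "\<exists>C \<delta>. \<delta> > 0 \<and> (\<forall>k. norm (v k - vstar) < \<delta> \<longrightarrow>
              (\<sigma> < lam \<longrightarrow>
                 norm ((v (Suc k) - vstar) - jacobian (phi A \<sigma>) (at vstar) *v (v k - vstar))
                   \<le> C * (norm (v k - vstar))\<^sup>2) \<and>
              (\<sigma> > lam \<longrightarrow>
                 norm ((v (Suc k) + vstar) - jacobian (phi A \<sigma>) (at vstar) *v (v k - vstar))
                   \<le> C * (norm (v k - vstar))\<^sup>2))"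
      unfolding jac by (rule iter)
  qed
qed


end
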